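(* Let $b\in\mathbb{C}\setminus\{1\}$, and let $a_n(q)$ be the sequence of polynomials in $q$ defined recursively by \[ a_0(q)=0,\qquad a_n(q) = b^n + \left(1-q^{n-1}\right)a_{n-1}(q) \quad \text{for } n\in\mathbb{N}. \] Then, for $q\in\mathbb{C}$ with $|q|<\min(|b|^{-1},1)$, the limit below exists and \[ \lim_{n\rightarrow\infty}\left( \sum_{1\le\ell\le n} b^\ell - a_n(q)\right) =\lim_{n\rightarrow\infty}\left( \frac{b-b^{n+1}}{1-b} - a_n(q) \right) = \frac{b}{1-b} - \frac{b\,(q;q)_\infty}{(b;q)_\infty}. \]
   Context: For $n\in\mathbb{N}_0\cup\{\infty\}$, $(a;q)_n := \prod_{j=0}^{n-1}(1-aq^j)$. If $b=0$, interpret $|b|^{-1}=\infty$. *)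

theory Defs
  imports "HOL-Analysis.Analysis"
begin

definition qpoch :: "complex \<Rightarrow> complex \<Rightarrow> nat \<Rightarrow> complex" where
  "qpoch a q n = (\<Prod>j<n. 1 - a * q ^ j)"

definition qpoch_inf :: "complex \<Rightarrow> complex \<Rightarrow> complex" where
  "qpoch_inf a q = (\<Prod>j. 1 - a * q ^ j)"

fun aseq :: "complex \<Rightarrow> complex \<Rightarrow> nat \<Rightarrow> complex" where
  "aseq b q 0 = 0"
| "aseq b q (Suc n) = b ^ Suc n + (1 - q ^ n) * aseq b q n"

end

theory Submission
  imports Defs
begin

lemma qpoch_lim:
  fixes a q :: complex
  assumes "norm q < 1"
  shows "(\<lambda>n. qpoch a q n) \<longlonglongrightarrow> qpoch_inf a q"
proof -
  have "summable (\<lambda>i. norm a * norm q ^ i)"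
    using assms by (intro summable_mult summable_geometric) auto
  hence "summable (\<lambda>i. norm ((1 - a * q ^ i) - 1))"
    by (simp add: norm_mult norm_power)
  hence "abs_convergent_prod (\<lambda>i. 1 - a * q ^ i)"
    by (rule summable_imp_abs_convergent_prod)
  hence "convergent_prod (\<lambda>i. 1 - a * q ^ i)"
    by (rule abs_convergent_prod_imp_convergent_prod)
  from convergent_prod_LIMSEQ[OF this]
  have "(\<lambda>n. qpoch a q (Suc n)) \<longlonglongrightarrow> qpoch_inf a q"
    by (simp add: qpoch_def qpoch_inf_def lessThan_Suc_atMost)
  thus ?thesis by (rule LIMSEQ_imp_Suc)
qed

lemma qpoch_Suc: "qpoch a q (Suc n) = qpoch a q n * (1 - a * q ^ n)"
  by (simp add: qpoch_def)

lemma qqpoch_nz: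
  fixes q :: complex
  assumes "norm q < 1"
  shows "qpoch q q n \<noteq> 0"
proof -
  have "1 - q * q ^ j \<noteq> 0" for j
  proof
    assume "1 - q * q ^ j = 0"
    hence "norm (q ^ Suc j) = 1" by (simp add: algebra_simps)
    moreover have "norm q ^ Suc j < 1"
      using assms by (subst power_less_one_iff) auto
    hence "norm (q ^ Suc j) < 1" by (simp only: norm_power)
    ultimately show False by simp
  qed
  thus ?thesis by (simp add: qpoch_def)
qed

lemma inv_qq_bounded:
  fixes q :: complex
  assumes "norm q < 1"
  shows "\<exists>M>0. \<forall>n. norm (1 / qpoch q q n) \<le> M"
proof -
  have "(\<lambda>n. qpoch q q n) \<longlonglongrightarrow> qpoch_inf q q" by (rule qpoch_lim[OF assms])
  moreover have "qpoch_inf q q \<noteq> 0"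
  proof -
    have "summable (\<lambda>i. norm q * norm q ^ i)"
      using assms by (intro summable_mult summable_geometric) auto
    hence "summable (\<lambda>i. norm ((1 - q * q ^ i) - 1))"
      by (simp add: norm_mult norm_power)
    hence "convergent_prod (\<lambda>i. 1 - q * q ^ i)"
      by (intro abs_convergent_prod_imp_convergent_prod summable_imp_abs_convergent_prod)
    moreover have "1 - q * q ^ i \<noteq> 0" for i
      using qqpoch_nz[OF assms, of "Suc i"] by (simp add: qpoch_def)
    ultimately show ?thesis unfolding qpoch_inf_def by (intro prodinf_nonzero) auto
  qed
  ultimately have "(\<lambda>n. 1 / qpoch q q n) \<longlonglongrightarrow> 1 / qpoch_inf q q"
    by (intro tendsto_intros) auto
  hence "Bseq (\<lambda>n. 1 / qpoch q q n)" by (intro convergent_imp_Bseq convergentI)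
  thus ?thesis by (simp add: Bseq_def)
qed

lemma euler_summable:
  fixes q z :: complex
  assumes "norm q < 1" "norm z < 1"
  shows "summable (\<lambda>m. 1 / qpoch q q m * z ^ m)"
proof -
  obtain M where M: "M > 0" "\<And>n. norm (1 / qpoch q q n) \<le> M"
    using inv_qq_bounded[OF assms(1)] by blast
  have "summable (\<lambda>m. M * norm z ^ m)"
    using assms by (intro summable_mult summable_geometric) auto
  moreover have "norm (1 / qpoch q q m * z ^ m) \<le> M * norm z ^ m" for m
  proof -
    have "norm (1 / qpoch q q m * z ^ m) = norm (1 / qpoch q q m) * norm z ^ m"
      by (simp only: norm_mult norm_power)
    also have "\<dots> \<le> M * norm z ^ m"
      by (rule mult_right_mono[OF M(2)]) simp
    finally show ?thesis .
  qed
  ultimately show ?thesis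
    by (intro summable_comparison_test[of "\<lambda>m. 1 / qpoch q q m * z ^ m" "\<lambda>m. M * norm z ^ m"]) auto
qed

lemma euler_finite:
  fixes q z :: complex
  assumes "norm q < 1"
  shows "(1 - z) * (\<Sum>m<Suc n. 1 / qpoch q q m * z ^ m)
     = (\<Sum>m<Suc n. 1 / qpoch q q m * (q * z) ^ m) - z ^ Suc n / qpoch q q n"
proof (induction n)
  case 0
  then show ?case by (simp add: qpoch_def)
next
  case (Suc n)
  have P: "qpoch q q n \<noteq> 0" "qpoch q q (Suc n) \<noteq> 0"
    using qqpoch_nz[OF assms] by auto
  have e: "qpoch q q (Suc n) = qpoch q q n * (1 - q ^ Suc n)"
    by (simp add: qpoch_Suc)
  have "(1 - z) * (\<Sum>m<Suc (Suc n). 1 / qpoch q q m * z ^ m)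
     = (1 - z) * (\<Sum>m<Suc n. 1 / qpoch q q m * z ^ m) + (1 - z) * (z ^ Suc n / qpoch q q (Suc n))"
    by (simp add: algebra_simps)
  also have "\<dots> = (\<Sum>m<Suc n. 1 / qpoch q q m * (q * z) ^ m) - z ^ Suc n / qpoch q q n
      + (1 - z) * (z ^ Suc n / qpoch q q (Suc n))"
    using Suc by simp
  also have "\<dots> = (\<Sum>m<Suc n. 1 / qpoch q q m * (q * z) ^ m) + (q * z) ^ Suc n / qpoch q q (Suc n)
      - z ^ Suc (Suc n) / qpoch q q (Suc n)"
  proof -
    have "(1 - z) * (z ^ Suc n / qpoch q q (Suc n)) - z ^ Suc n / qpoch q q n
        = (q * z) ^ Suc n / qpoch q q (Suc n) - z ^ Suc (Suc n) / qpoch q q (Suc n)"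
    proof -
      have r: "1 - q ^ Suc n \<noteq> 0" using P e by auto
      have g: "\<And>X Y W (A::complex) B. A \<noteq> 0 \<Longrightarrow> B \<noteq> 0 \<Longrightarrow> X - Y * B = W \<Longrightarrow>
          X / (A * B) - Y / A = W / (A * B)"
        by (simp add: field_simps)
      have "(1 - z) * z ^ Suc n - z ^ Suc n * (1 - q ^ Suc n) = (q * z) ^ Suc n - z ^ Suc (Suc n)"
        by (simp add: algebra_simps power_mult_distrib)
      from g[OF P(1) r this] show ?thesis unfolding e by (simp add: diff_divide_distrib)
    qed
    thus ?thesis by (simp add: algebra_simps)
  qed
  also have "\<dots> = (\<Sum>m<Suc (Suc n). 1 / qpoch q q m * (q * z) ^ m) - z ^ Suc (Suc n) / qpoch q q (Suc n)"
    by simp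
  finally show ?case .
qed

definition EF :: "complex \<Rightarrow> complex \<Rightarrow> complex" where
  "EF q z = (\<Sum>m. 1 / qpoch q q m * z ^ m)"

lemma EF_funeq:
  fixes q z :: complex
  assumes "norm q < 1" "norm z < 1"
  shows "(1 - z) * EF q z = EF q (q * z)"
proof -
  have nqz: "norm (q * z) < 1"
    using assms by (simp add: norm_mult) (metis norm_ge_zero mult_strict_mono' mult_1_right)
  have s1: "summable (\<lambda>m. 1 / qpoch q q m * z ^ m)" by (rule euler_summable[OF assms])
  have s2: "summable (\<lambda>m. 1 / qpoch q q m * (q * z) ^ m)" by (rule euler_summable[OF assms(1) nqz])
  have L1: "(\<lambda>n. (1 - z) * (\<Sum>m<Suc n. 1 / qpoch q q m * z ^ m)) \<longlonglongrightarrow> (1 - z) * EF q z"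
    unfolding EF_def
    by (intro tendsto_mult tendsto_const LIMSEQ_Suc[OF summable_LIMSEQ[OF s1]])
  have t0: "(\<lambda>n. z * (1 / qpoch q q n * z ^ n)) \<longlonglongrightarrow> z * 0"
    by (intro tendsto_mult tendsto_const summable_LIMSEQ_zero[OF s1])
  have L2: "(\<lambda>n. (\<Sum>m<Suc n. 1 / qpoch q q m * (q * z) ^ m) - z ^ Suc n / qpoch q q n)
      \<longlonglongrightarrow> EF q (q * z) - z * 0"
    unfolding EF_def
    using tendsto_diff[OF LIMSEQ_Suc[OF summable_LIMSEQ[OF s2]] t0] by (simp add: field_simps)
  have "(\<lambda>n. (1 - z) * (\<Sum>m<Suc n. 1 / qpoch q q m * z ^ m)) \<longlonglongrightarrow> EF q (q * z)"
    using L2 euler_finite[OF assms(1)] by simp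
  thus ?thesis using L1 LIMSEQ_unique by blast
qed

lemma EF_iter:
  fixes q z :: complex
  assumes "norm q < 1" "norm z < 1"
  shows "EF q z * qpoch z q k = EF q (q ^ k * z)"
proof (induction k)
  case 0
  then show ?case by (simp add: qpoch_def)
next
  case (Suc k)
  have "norm (q ^ k * z) \<le> norm z"
    using assms by (simp add: norm_mult norm_power mult_left_le_one_le power_le_one)
  hence n: "norm (q ^ k * z) < 1" using assms by simp
  have "EF q z * qpoch z q (Suc k) = (1 - q ^ k * z) * EF q (q ^ k * z)"
    using Suc by (simp add: qpoch_Suc algebra_simps)
  also have "\<dots> = EF q (q * (q ^ k * z))" by (rule EF_funeq[OF assms(1) n])
  finally show ?case by (simp add: mult.assoc)
qed

lemma EF_euler:
  fixes q z :: complex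
  assumes "norm q < 1" "norm z < 1"
  shows "EF q z * qpoch_inf z q = 1"
proof -
  have L1: "(\<lambda>k. EF q z * qpoch z q k) \<longlonglongrightarrow> EF q z * qpoch_inf z q"
    by (intro tendsto_mult tendsto_const qpoch_lim[OF assms(1)])
  have sK: "summable (\<lambda>m. 1 / qpoch q q m * (1/2) ^ m)"
    using euler_summable[OF assms(1), of "1/2"] by simp
  have c: "isCont (\<lambda>x. \<Sum>m. 1 / qpoch q q m * x ^ m) 0"
    by (rule isCont_powser[OF sK]) simp
  have t: "(\<lambda>k. q ^ k * z) \<longlonglongrightarrow> 0 * z"
    by (intro tendsto_mult tendsto_const LIMSEQ_power_zero) (use assms in simp)
  have "(\<lambda>k. EF q (q ^ k * z)) \<longlonglongrightarrow> EF q 0"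
    using isCont_tendsto_compose[OF c[folded EF_def], of "\<lambda>k. q ^ k * z"] t by simp
  moreover have "EF q 0 = 1"
    unfolding EF_def powser_zero by (simp add: qpoch_def)
  ultimately have L2: "(\<lambda>k. EF q (q ^ k * z)) \<longlonglongrightarrow> 1" by simp
  show ?thesis using L1 L2 EF_iter[OF assms] LIMSEQ_unique by simp
qed

lemma geom_sum_eq:
  fixes b :: complex
  assumes "b \<noteq> 1"
  shows "(\<Sum>l=1..n. b ^ l) = (b - b ^ (n + 1)) / (1 - b)"
proof (induction n)
  case 0
  then show ?case by simp
next
  case (Suc n)
  have ne: "1 - b \<noteq> 0" using assms by simp
  have "(\<Sum>l=1..Suc n. b ^ l) = (b - b ^ (n + 1)) / (1 - b) + b ^ Suc n"
    using Suc by simp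
  also have "\<dots> = (b - b ^ (Suc n + 1)) / (1 - b)"
    using ne by (simp add: field_simps)
  finally show ?case .
qed

lemma c_formula:
  fixes b q :: complex
  assumes "b \<noteq> 1" "norm q < 1"
  shows "aseq b q (Suc n) + b ^ (n + 2) / (1 - b)
    = b / (1 - b) * qpoch q q n * (\<Sum>m<Suc n. 1 / qpoch q q m * (b * q) ^ m)"
proof (induction n)
  case 0
  have ne: "1 - b \<noteq> 0" using assms by simp
  show ?case using ne by (simp add: qpoch_def field_simps power2_eq_square)
next
  case (Suc n)
  have ne: "1 - b \<noteq> 0" using assms by simp
  have P: "qpoch q q (Suc n) \<noteq> 0" using qqpoch_nz[OF assms(2)] by auto
  have e: "qpoch q q (Suc n) = qpoch q q n * (1 - q ^ Suc n)"
    by (simp add: qpoch_Suc)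
  have "aseq b q (Suc (Suc n)) + b ^ (Suc n + 2) / (1 - b)
      = b ^ Suc (Suc n) + (1 - q ^ Suc n) * (aseq b q (Suc n) + b ^ (n + 2) / (1 - b))
        - (1 - q ^ Suc n) * (b ^ (n + 2) / (1 - b)) + b ^ (Suc n + 2) / (1 - b)"
    by (simp add: algebra_simps)
  also have "b ^ Suc (Suc n) - (1 - q ^ Suc n) * (b ^ (n + 2) / (1 - b)) + b ^ (Suc n + 2) / (1 - b)
      = b / (1 - b) * (b * q) ^ Suc n"
  proof -
    have g: "\<And>X Y Z W (D::complex). D \<noteq> 0 \<Longrightarrow> X - Y * (Z / D) + W / D = (X * D - Y * Z + W) / D"
      by (simp add: field_simps)
    have "b ^ Suc (Suc n) * (1 - b) - (1 - q ^ Suc n) * b ^ (n + 2) + b ^ (Suc n + 2) = b * (b * q) ^ Suc n"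
      by (simp add: algebra_simps power_mult_distrib)
    thus ?thesis unfolding g[OF ne] by simp
  qed
  hence "b ^ Suc (Suc n) + (1 - q ^ Suc n) * (aseq b q (Suc n) + b ^ (n + 2) / (1 - b))
        - (1 - q ^ Suc n) * (b ^ (n + 2) / (1 - b)) + b ^ (Suc n + 2) / (1 - b)
      = (1 - q ^ Suc n) * (aseq b q (Suc n) + b ^ (n + 2) / (1 - b)) + b / (1 - b) * (b * q) ^ Suc n"
    by (simp add: algebra_simps)
  also have "\<dots> = (1 - q ^ Suc n) * (b / (1 - b) * qpoch q q n * (\<Sum>m<Suc n. 1 / qpoch q q m * (b * q) ^ m))
      + b / (1 - b) * (b * q) ^ Suc n"
    using Suc by simp
  also have "\<dots> = b / (1 - b) * qpoch q q (Suc n) * ((\<Sum>m<Suc n. 1 / qpoch q q m * (b * q) ^ m)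
       + 1 / qpoch q q (Suc n) * (b * q) ^ Suc n)"
  proof -
    have g2: "\<And>A P r k S T :: complex. A \<noteq> 0 \<Longrightarrow> A = P * r \<Longrightarrow>
        r * (k * P * S) + k * T = k * A * (S + 1 / A * T)"
      by (simp add: field_simps)
    show ?thesis by (rule g2[OF P e])
  qed
  also have "\<dots> = b / (1 - b) * qpoch q q (Suc n) * (\<Sum>m<Suc (Suc n). 1 / qpoch q q m * (b * q) ^ m)"
    by (simp only: sum.lessThan_Suc)
  finally show ?case .
qed

theorem theorem1p2:
  fixes b q :: complex
  assumes "b \<noteq> 1"
    and "norm q < 1"
    and "b \<noteq> 0 \<Longrightarrow> norm q < 1 / norm b"
  shows "((\<lambda>n. (\<Sum>l=1..n. b ^ l) - aseq b q n)
           \<longlonglongrightarrow> b / (1 - b) - b * qpoch_inf q q / qpoch_inf b q)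
       \<and> ((\<lambda>n. (b - b ^ (n + 1)) / (1 - b) - aseq b q n)
           \<longlonglongrightarrow> b / (1 - b) - b * qpoch_inf q q / qpoch_inf b q)"
proof -
  have ne: "1 - b \<noteq> 0" using assms by simp
  have nbq: "norm (b * q) < 1"
  proof (cases "b = 0")
    case True then show ?thesis by simp
  next
    case False
    hence "norm q * norm b < 1" using assms(3) by (simp add: field_simps)
    then show ?thesis by (simp add: norm_mult mult.commute)
  qed
  have eu: "EF q (b * q) * qpoch_inf (b * q) q = 1" by (rule EF_euler[OF assms(2) nbq])
  have sh: "qpoch_inf b q = (1 - b) * qpoch_inf (b * q) q"
  proof -
    have "qpoch b q (Suc n) = (1 - b) * qpoch (b * q) q n" for n
      unfolding qpoch_def by (subst prod.lessThan_Suc_shift) (simp add: mult.assoc)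
    hence "(\<lambda>n. qpoch b q (Suc n)) \<longlonglongrightarrow> (1 - b) * qpoch_inf (b * q) q"
      by (simp, intro tendsto_mult tendsto_const qpoch_lim[OF assms(2)])
    moreover have "(\<lambda>n. qpoch b q (Suc n)) \<longlonglongrightarrow> qpoch_inf b q"
      by (rule LIMSEQ_Suc[OF qpoch_lim[OF assms(2)]])
    ultimately show ?thesis using LIMSEQ_unique by blast
  qed
  have sb: "summable (\<lambda>m. 1 / qpoch q q m * (b * q) ^ m)"
    by (rule euler_summable[OF assms(2) nbq])
  have "(\<lambda>n. b / (1 - b) * qpoch q q n * (\<Sum>m<Suc n. 1 / qpoch q q m * (b * q) ^ m))
      \<longlonglongrightarrow> b / (1 - b) * qpoch_inf q q * EF q (b * q)"
    unfolding EF_def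
    by (intro tendsto_mult tendsto_const qpoch_lim[OF assms(2)] LIMSEQ_Suc[OF summable_LIMSEQ[OF sb]])
  hence A: "(\<lambda>n. b / (1 - b) - (aseq b q (Suc n) + b ^ (n + 2) / (1 - b)))
      \<longlonglongrightarrow> b / (1 - b) - b / (1 - b) * qpoch_inf q q * EF q (b * q)"
    unfolding c_formula[OF assms(1,2)] by (intro tendsto_diff tendsto_const)
  have B: "b / (1 - b) - (aseq b q (Suc n) + b ^ (n + 2) / (1 - b))
      = (b - b ^ (Suc n + 1)) / (1 - b) - aseq b q (Suc n)" for n
    using ne by (simp add: diff_divide_distrib del: aseq.simps)
  have C: "b / (1 - b) * qpoch_inf q q * EF q (b * q) = b * qpoch_inf q q / qpoch_inf b q"
  proof -
    have nz: "qpoch_inf (b * q) q \<noteq> 0" using eu by auto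
    have "EF q (b * q) = 1 / qpoch_inf (b * q) q" using eu nz by (simp add: field_simps)
    thus ?thesis using nz ne unfolding sh by (simp add: field_simps)
  qed
  from A[unfolded B C] have "(\<lambda>n. (b - b ^ (Suc n + 1)) / (1 - b) - aseq b q (Suc n))
      \<longlonglongrightarrow> b / (1 - b) - b * qpoch_inf q q / qpoch_inf b q" .
  hence L: "(\<lambda>n. (b - b ^ (n + 1)) / (1 - b) - aseq b q n)
      \<longlonglongrightarrow> b / (1 - b) - b * qpoch_inf q q / qpoch_inf b q"
    by (rule LIMSEQ_imp_Suc)
  have E: "(\<lambda>n. (\<Sum>l=1..n. b ^ l) - aseq b q n) = (\<lambda>n. (b - b ^ (n + 1)) / (1 - b) - aseq b q n)"
    by (simp only: geom_sum_eq[OF assms(1)])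
  show ?thesis unfolding E by (intro conjI L)
qed

end
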